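(* Let $w_0\in\mathbb{N}$ and $w=(w_1,\dots,w_n)\in\mathbb{N}^n$ with each $w_i\le 2^{n^2}$, let $M=cn$ for a sufficiently large absolute constant $c>0$, let $\lambda=M\|w\|_2$, and define $p_W(x)=\left(\sum_{i=1}^n w_ix_i-w_0\right)^2+\lambda\sum_{i=1}^n x_i(1-x_i)$, $f_W(x)=\mathrm{sign}(\tfrac12-p_W(x))$, and $\beta_n=\frac{1}{2\|w\|_2}\left(\sqrt{M^2+2}-M\right)$. Let $x\in[0,1]^n$ be at $\ell_1$ distance at most $\beta_n$ from some $z\in\{0,1\}^n$. If $w\cdot z=w_0$, then $f_W(x)=1$.
   Context: $\mathrm{sign}(0)=1$; $\|w\|_2$ is the Euclidean norm. *)

theory Defs
  imports Complex_Main
begin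

text \<open>Vectors in R^n / N^n are functions on indices 1..n.\<close>

definition sign :: "real \<Rightarrow> real" where
  "sign t = (if t \<ge> 0 then 1 else -1)"

definition wnorm :: "nat \<Rightarrow> (nat \<Rightarrow> nat) \<Rightarrow> real" where
  "wnorm n w = sqrt (\<Sum>i=1..n. (real (w i))^2)"

definition pW :: "nat \<Rightarrow> real \<Rightarrow> nat \<Rightarrow> (nat \<Rightarrow> nat) \<Rightarrow> (nat \<Rightarrow> real) \<Rightarrow> real" where
  "pW n M w0 w x =
     ((\<Sum>i=1..n. real (w i) * x i) - real w0)^2
     + (M * wnorm n w) * (\<Sum>i=1..n. x i * (1 - x i))"

definition fW :: "nat \<Rightarrow> real \<Rightarrow> nat \<Rightarrow> (nat \<Rightarrow> nat) \<Rightarrow> (nat \<Rightarrow> real) \<Rightarrow> real" where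
  "fW n M w0 w x = sign (1/2 - pW n M w0 w x)"

definition betan :: "nat \<Rightarrow> real \<Rightarrow> (nat \<Rightarrow> nat) \<Rightarrow> real" where
  "betan n M w = 1 / (2 * wnorm n w) * (sqrt (M^2 + 2) - M)"

end

theory Submission
  imports Defs
begin

lemma key:
  fixes n w0 w x z and M :: real
  assumes M: "M \<ge> 0"
    and xb: "\<forall>i\<in>{1..n}. 0 \<le> x i \<and> x i \<le> 1"
    and zb: "\<forall>i\<in>{1..n}. z i \<in> {0::nat,1}"
    and d: "(\<Sum>i=1..n. \<bar>x i - real (z i)\<bar>) \<le> betan n M w"
    and s: "(\<Sum>i=1..n. w i * z i) = w0"
  shows "pW n M w0 w x \<le> 1/2"
proof -
  define W where "W = wnorm n w"
  define \<delta> where "\<delta> = (\<Sum>i=1..n. \<bar>x i - real (z i)\<bar>)"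
  have W0: "W \<ge> 0" unfolding W_def wnorm_def by (simp add: sum_nonneg)
  have d0: "\<delta> \<ge> 0" unfolding \<delta>_def by (simp add: sum_nonneg)
  have wle: "real (w i) \<le> W" if "i \<in> {1..n}" for i
  proof -
    have "(real (w i))^2 \<le> (\<Sum>i=1..n. (real (w i))^2)"
      using that by (intro member_le_sum) auto
    then have "sqrt ((real (w i))^2) \<le> W" unfolding W_def wnorm_def
      using real_sqrt_le_mono by blast
    then show ?thesis by simp
  qed
  have lin: "(\<Sum>i=1..n. real (w i) * x i) - real w0 = (\<Sum>i=1..n. real (w i) * (x i - real (z i)))"
  proof -
    have "real w0 = (\<Sum>i=1..n. real (w i) * real (z i))"
      using s[symmetric] by simp
    then show ?thesis by (simp add: sum_subtractf right_diff_distrib)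
  qed
  have linb: "\<bar>(\<Sum>i=1..n. real (w i) * (x i - real (z i)))\<bar> \<le> W * \<delta>"
  proof -
    have "\<bar>(\<Sum>i=1..n. real (w i) * (x i - real (z i)))\<bar> \<le> (\<Sum>i=1..n. \<bar>real (w i) * (x i - real (z i))\<bar>)"
      by (rule sum_abs)
    also have "\<dots> \<le> (\<Sum>i=1..n. W * \<bar>x i - real (z i)\<bar>)"
      by (intro sum_mono) (simp add: abs_mult mult_right_mono wle)
    also have "\<dots> = W * \<delta>" unfolding \<delta>_def by (simp add: sum_distrib_left)
    finally show ?thesis .
  qed
  have sq: "((\<Sum>i=1..n. real (w i) * x i) - real w0)^2 \<le> (W * \<delta>)^2"
    unfolding lin using linb
    by (metis abs_ge_zero power2_abs power_mono)
  have pen: "(\<Sum>i=1..n. x i * (1 - x i)) \<le> \<delta>"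
    unfolding \<delta>_def
  proof (intro sum_mono)
    fix i assume i: "i \<in> {1..n}"
    then have "0 \<le> x i" "x i \<le> 1" "z i = 0 \<or> z i = 1" using xb zb by auto
    moreover have "x i * 2 \<le> 1 + x i * x i"
      using sum_squares_ge_zero[of "x i - 1" 0] by (simp add: algebra_simps power2_eq_square)
    ultimately show "x i * (1 - x i) \<le> \<bar>x i - real (z i)\<bar>"
      by (auto simp: mult_le_cancel_left1 mult_le_cancel_right1 algebra_simps)
  qed
  have p: "pW n M w0 w x \<le> (W*\<delta>)^2 + M * (W * \<delta>)"
  proof -
    have "(M * W) * (\<Sum>i=1..n. x i * (1 - x i)) \<le> (M*W) * \<delta>"
      using pen M W0 by (simp add: mult_left_mono)
    then show ?thesis unfolding pW_def W_def[symmetric] using sq by (simp add: algebra_simps)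
  qed
  show ?thesis
  proof (cases "W = 0")
    case True
    then show ?thesis using p by simp
  next
    case False
    define S where "S = sqrt (M^2 + 2)"
    have S2: "S^2 = M^2 + 2" unfolding S_def by simp
    have SM: "S \<ge> M" unfolding S_def using M
      by (metis add_increasing2 less_eq_real_def real_le_rsqrt zero_le_numeral)
    have "\<delta> \<le> (S - M) / (2 * W)" using d unfolding \<delta>_def betan_def W_def[symmetric] S_def by simp
    then have t: "W * \<delta> \<le> (S - M)/2" using False W0 by (simp add: field_simps)
    define t where "t = W * \<delta>"
    have t0: "t \<ge> 0" using W0 d0 t_def by simp
    have "t^2 + M*t \<le> ((S-M)/2)^2 + M*((S-M)/2)"
      using t t0 M unfolding t_def[symmetric]
      by (intro add_mono power_mono mult_left_mono) auto
    also have "\<dots> = (S^2 - M^2)/4" by (simp add: power2_eq_square field_simps)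
    also have "\<dots> = 1/2" using S2 by simp
    finally show ?thesis using p t_def by simp
  qed
qed

theorem claim5p10:
  shows "\<exists>c0>0. \<forall>c\<ge>c0. \<forall>(n::nat) (w0::nat) (w::nat \<Rightarrow> nat) (x::nat \<Rightarrow> real) (z::nat \<Rightarrow> nat).
    (\<forall>i\<in>{1..n}. w i \<le> 2^(n^2)) \<longrightarrow>
    (\<forall>i\<in>{1..n}. 0 \<le> x i \<and> x i \<le> 1) \<longrightarrow>
    (\<forall>i\<in>{1..n}. z i \<in> {0,1}) \<longrightarrow>
    (\<Sum>i=1..n. \<bar>x i - real (z i)\<bar>) \<le> betan n (c * real n) w \<longrightarrow>
    (\<Sum>i=1..n. w i * z i) = w0 \<longrightarrow>
    fW n (c * real n) w0 w x = 1"
proof (intro exI[of _ 1] conjI allI impI)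
  fix c :: real and n w0 w x z
  assume c: "1 \<le> c" and _: "\<forall>i\<in>{1..n}. w i \<le> 2^(n^2)"
    and xb: "\<forall>i\<in>{1..n}. 0 \<le> x i \<and> x i \<le> 1"
    and zb: "\<forall>i\<in>{1..n}. z i \<in> {0::nat,1}"
    and d: "(\<Sum>i=1..n. \<bar>x i - real (z i)\<bar>) \<le> betan n (c * real n) w"
    and s: "(\<Sum>i=1..n. w i * z i) = w0"
  have "pW n (c * real n) w0 w x \<le> 1/2"
    by (rule key[OF _ xb zb d s]) (use c in simp)
  then show "fW n (c * real n) w0 w x = 1" unfolding fW_def sign_def by simp
qed simp

end
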